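(* Let $A$ be a partial ring. If $a_1,a_2,a\in A$ and $(a_1\dotplus a_2,\,a)\in R(A)$, then $(a_1,a_2)\in A_2$ and $a_1+a_2=a$.
   Context: A partial ring is a set $A$ with $0$, a set $A_2\subseteq A\times A$ of summable pairs and a partial addition $+\colon A_2\to A$ ($0$ a unit summable with everything; commutative; associative in the sense: $(a,b),(a+b,c)\in A_2$ iff $(b,c),(a,b+c)\in A_2$, and then $(a+b)+c=a+(b+c)$), together with a commutative associative multiplication with unit $1$ such that $0\cdot a=0$ and $(a_1,a_2)\in A_2\Rightarrow(a_1x,a_2x)\in A_2$, $(a_1+a_2)x=a_1x+a_2x$. Let $\mathbb{N}[A]$ be the monoid semiring of the multiplicative monoid of $A$; additively it is the free commutative monoid on the underlying set of $A$, with elements written $b_1\dotplus\cdots\dotplus b_r$ (the empty sum, denoted $\emptyset$, is its additive zero, distinct from the element $0\in A$). Let $R_1(A)=\{(0\dotplus x,\,x),\ (a_1\dotplus a_2\dotplus x,\,(a_1+a_2)\dotplus x) : (a_1,a_2)\in A_2,\ x\in\mathbb{N}[A]\}$, and let $R(A)$ be the smallest equivalence relation on $\mathbb{N}[A]$ containing $R_1(A)$. *)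

theory Defs
  imports Main "HOL-Library.Multiset"
begin

text \<open>A partial ring on the carrier type 'a: zero z, summable pairs S, partial addition pl
  (only meaningful on S), multiplication mul with unit one.\<close>

definition partial_ring ::
  "'a \<Rightarrow> ('a \<times> 'a) set \<Rightarrow> ('a \<Rightarrow> 'a \<Rightarrow> 'a) \<Rightarrow> 'a \<Rightarrow> ('a \<Rightarrow> 'a \<Rightarrow> 'a) \<Rightarrow> bool" where
  "partial_ring z S pl one mul \<longleftrightarrow>
     (\<forall>a. (z, a) \<in> S \<and> pl z a = a) \<and>
     (\<forall>a b. (a, b) \<in> S \<longrightarrow> (b, a) \<in> S \<and> pl a b = pl b a) \<and>
     (\<forall>a b c. ((a, b) \<in> S \<and> (pl a b, c) \<in> S) \<longleftrightarrow> ((b, c) \<in> S \<and> (a, pl b c) \<in> S)) \<and>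
     (\<forall>a b c. (a, b) \<in> S \<and> (pl a b, c) \<in> S \<longrightarrow> pl (pl a b) c = pl a (pl b c)) \<and>
     (\<forall>a b. mul a b = mul b a) \<and>
     (\<forall>a b c. mul (mul a b) c = mul a (mul b c)) \<and>
     (\<forall>a. mul one a = a) \<and>
     (\<forall>a. mul z a = z) \<and>
     (\<forall>a1 a2 x. (a1, a2) \<in> S \<longrightarrow> (mul a1 x, mul a2 x) \<in> S \<and> mul (pl a1 a2) x = pl (mul a1 x) (mul a2 x))"

text \<open>N[A] additively = free commutative monoid on A = 'a multiset; b1 \<dotplus> ... \<dotplus> br = {#b1,...,br#}.\<close>

definition R1 :: "'a \<Rightarrow> ('a \<times> 'a) set \<Rightarrow> ('a \<Rightarrow> 'a \<Rightarrow> 'a) \<Rightarrow> ('a multiset \<times> 'a multiset) set" where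
  "R1 z S pl =
     {({#z#} + x, x) | x. True} \<union>
     {({#a1, a2#} + x, {#pl a1 a2#} + x) | a1 a2 x. (a1, a2) \<in> S}"

definition R :: "'a \<Rightarrow> ('a \<times> 'a) set \<Rightarrow> ('a \<Rightarrow> 'a \<Rightarrow> 'a) \<Rightarrow> ('a multiset \<times> 'a multiset) set" where
  "R z S pl = (R1 z S pl \<union> (R1 z S pl)\<inverse>)\<^sup>*"

end

theory Submission
  imports Defs
begin

fun fsum :: "'a \<Rightarrow> ('a \<times> 'a) set \<Rightarrow> ('a \<Rightarrow> 'a \<Rightarrow> 'a) \<Rightarrow> 'a list \<Rightarrow> 'a option" where
  "fsum z S pl [] = Some z"
| "fsum z S pl (b # xs) = (case fsum z S pl xs of None \<Rightarrow> None
      | Some s \<Rightarrow> (if (b, s) \<in> S then Some (pl b s) else None))"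

lemma fsum_cong: "fsum z S pl xs = fsum z S pl ys \<Longrightarrow> fsum z S pl (b # xs) = fsum z S pl (b # ys)"
  by simp

lemma fsum_swap:
  assumes "partial_ring z S pl one mul"
  shows "fsum z S pl (a # b # xs) = fsum z S pl (b # a # xs)"
proof (cases "fsum z S pl xs")
  case None then show ?thesis by simp
next
  case (Some s)
  from assms have C: "\<And>a b. (a, b) \<in> S \<Longrightarrow> (b, a) \<in> S \<and> pl a b = pl b a"
    and A: "\<And>a b c. ((a, b) \<in> S \<and> (pl a b, c) \<in> S) \<longleftrightarrow> ((b, c) \<in> S \<and> (a, pl b c) \<in> S)"
    and As: "\<And>a b c. (a, b) \<in> S \<and> (pl a b, c) \<in> S \<Longrightarrow> pl (pl a b) c = pl a (pl b c)"
    unfolding partial_ring_def by blast+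
  have E: "((b, s) \<in> S \<and> (a, pl b s) \<in> S) \<longleftrightarrow> ((a, s) \<in> S \<and> (b, pl a s) \<in> S)"
  proof -
    have "((b, s) \<in> S \<and> (a, pl b s) \<in> S) \<longleftrightarrow> ((a, b) \<in> S \<and> (pl a b, s) \<in> S)" using A[of a b s] by blast
    also have "\<dots> \<longleftrightarrow> ((b, a) \<in> S \<and> (pl b a, s) \<in> S)" using C[of a b] C[of b a] by auto
    also have "\<dots> \<longleftrightarrow> ((a, s) \<in> S \<and> (b, pl a s) \<in> S)" using A[of b a s] by blast
    finally show ?thesis .
  qed
  have V: "(b, s) \<in> S \<and> (a, pl b s) \<in> S \<Longrightarrow> pl a (pl b s) = pl b (pl a s)"
  proof -
    assume h: "(b, s) \<in> S \<and> (a, pl b s) \<in> S"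
    then have ab: "(a, b) \<in> S" "(pl a b, s) \<in> S" using A[of a b s] by blast+
    then have ba: "(b, a) \<in> S" "pl a b = pl b a" using C[of a b] by auto
    have "pl a (pl b s) = pl (pl a b) s" using As[of a b s] ab by simp
    also have "\<dots> = pl (pl b a) s" using ba by simp
    also have "\<dots> = pl b (pl a s)" using As[of b a s] ba ab by simp
    finally show ?thesis .
  qed
  show ?thesis using Some E V by auto
qed

lemma fsum_move:
  assumes "partial_ring z S pl one mul"
  shows "fsum z S pl (ys1 @ a # ys2) = fsum z S pl (a # ys1 @ ys2)"
proof (induction ys1)
  case Nil then show ?case by simp
next
  case (Cons c ys1)
  have "fsum z S pl ((c # ys1) @ a # ys2) = fsum z S pl (c # a # ys1 @ ys2)"
    using fsum_cong[OF Cons.IH] by simp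
  also have "\<dots> = fsum z S pl (a # c # ys1 @ ys2)" using fsum_swap[OF assms] by simp
  finally show ?case by simp
qed

lemma fsum_perm:
  assumes "partial_ring z S pl one mul"
  shows "mset xs = mset ys \<Longrightarrow> fsum z S pl xs = fsum z S pl ys"
proof (induction xs arbitrary: ys)
  case Nil then show ?case by simp
next
  case (Cons a xs)
  then have "a \<in> set ys" by (metis list.set_intros(1) set_mset_mset)
  then obtain ys1 ys2 where Y: "ys = ys1 @ a # ys2" by (metis split_list)
  have "mset xs = mset (ys1 @ ys2)" using Cons.prems Y by simp
  then have "fsum z S pl xs = fsum z S pl (ys1 @ ys2)" using Cons.IH by blast
  then show ?case using Y fsum_move[OF assms] fsum_cong by metis
qed

definition gsum where "gsum z S pl M = fsum z S pl (SOME xs. mset xs = M)"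

lemma gsum_eq:
  assumes "partial_ring z S pl one mul"
  shows "gsum z S pl (mset xs) = fsum z S pl xs"
  unfolding gsum_def by (rule fsum_perm[OF assms], rule someI_ex, blast)

lemma gsum_R1:
  assumes P: "partial_ring z S pl one mul" and "(M, N) \<in> R1 z S pl"
  shows "gsum z S pl M = gsum z S pl N"
proof -
  from P have Z: "\<And>a. (z, a) \<in> S \<and> pl z a = a"
    and A: "\<And>a b c. ((a, b) \<in> S \<and> (pl a b, c) \<in> S) \<longleftrightarrow> ((b, c) \<in> S \<and> (a, pl b c) \<in> S)"
    and As: "\<And>a b c. (a, b) \<in> S \<and> (pl a b, c) \<in> S \<Longrightarrow> pl (pl a b) c = pl a (pl b c)"
    unfolding partial_ring_def by blast+
  from assms(2) consider x where "M = {#z#} + x" "N = x"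
    | a1 a2 x where "M = {#a1, a2#} + x" "N = {#pl a1 a2#} + x" "(a1, a2) \<in> S"
    unfolding R1_def by blast
  then show ?thesis
  proof cases
    case 1
    obtain xs where X: "mset xs = x" using ex_mset by blast
    have "M = mset (z # xs)" "N = mset xs" using 1 X by auto
    moreover have "fsum z S pl (z # xs) = fsum z S pl xs"
      using Z by (cases "fsum z S pl xs") auto
    ultimately show ?thesis using gsum_eq[OF P] by metis
  next
    case 2
    obtain xs where X: "mset xs = x" using ex_mset by blast
    have "M = mset (a1 # a2 # xs)" "N = mset (pl a1 a2 # xs)" using 2 X by auto
    moreover have "fsum z S pl (a1 # a2 # xs) = fsum z S pl (pl a1 a2 # xs)"
    proof (cases "fsum z S pl xs")
      case None then show ?thesis by simp
    next
      case (Some s)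
      then show ?thesis using A[of a1 a2 s] As[of a1 a2 s] 2(3) by auto
    qed
    ultimately show ?thesis using gsum_eq[OF P] by metis
  qed
qed

theorem mainTheorem16:
  fixes z one :: 'a and S :: "('a \<times> 'a) set" and pl mul :: "'a \<Rightarrow> 'a \<Rightarrow> 'a"
    and a1 a2 a :: 'a
  assumes "partial_ring z S pl one mul"
    and "({#a1, a2#}, {#a#}) \<in> R z S pl"
  shows "(a1, a2) \<in> S \<and> pl a1 a2 = a"
proof -
  have G: "gsum z S pl {#a1, a2#} = gsum z S pl {#a#}"
    using assms(2) unfolding R_def
  proof (induction rule: rtrancl_induct)
    case base then show ?case by simp
  next
    case (step y w)
    then show ?case using gsum_R1[OF assms(1)] by auto
  qed
  from assms(1) have Z: "\<And>a. (z, a) \<in> S \<and> pl z a = a"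
    and C: "\<And>a b. (a, b) \<in> S \<Longrightarrow> (b, a) \<in> S \<and> pl a b = pl b a"
    unfolding partial_ring_def by blast+
  have f1: "fsum z S pl [b] = Some b" for b
  proof -
    have "(b, z) \<in> S" "pl b z = b" using Z[of b] C[of z b] by auto
    then show ?thesis by simp
  qed
  have "gsum z S pl {#a#} = Some a" using gsum_eq[OF assms(1), of "[a]"] f1 by simp
  moreover have "gsum z S pl {#a1, a2#} = fsum z S pl [a1, a2]"
    using gsum_eq[OF assms(1), of "[a1, a2]"] by (simp add: add_mset_commute)
  ultimately have "fsum z S pl [a1, a2] = Some a" using G by simp
  then show ?thesis using f1[of a2] by (auto split: if_splits)
qed

end
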